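(* Let $G$ be a graph and $n\ge1$, and let $\eta:G^n\to G^{(n)}$ be the graph map $\eta(v_1,\dots,v_n)=\prod_{i=1}^n v_i$. Then the induced homomorphism $\eta^*:H_1(G^n)\to H_1(G^{(n)})$, given on cycles by $\eta^*([C])=[\eta(C)]$, is surjective.
   Context: All graphs are connected, simple and locally finite. $G^n$ is the Cartesian (box) product graph. $G^{(n)}$ is the $n$th reduced power: vertices are degree-$n$ monomials in vertices of $G$, adjacent iff they differ by moving one token along one edge of $G$ (equivalently, the quotient of $G^n$ by $\Sigma_n$). For a graph $K$ with ordered vertices, $C_1(K)$ is the free abelian group on edges $w_iw_j$ ($i<j$), $[w_i,w_j]$ equals $w_iw_j$, $-w_jw_i$ or $0$ according as $i<j$, $i>j$, $i=j$, and for a path $P=(p_0,\dots,p_\ell)$, $[P]=\sum_i[p_i,p_{i+1}]$. $H_1(K)$ is the subgroup of $C_1(K)$ generated by $[C]$ for cycles $C$. A graph map $f$ induces $f^*:C_1\to C_1$ by $[u,v]\mapsto[f(u),f(v)]$. *)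

theory Defs
  imports Main "HOL-Library.Multiset"
begin

definition simple_graph :: "'v set \<Rightarrow> ('v \<Rightarrow> 'v \<Rightarrow> bool) \<Rightarrow> bool" where
  "simple_graph V E \<longleftrightarrow>
     (\<forall>u v. E u v \<longrightarrow> u \<in> V \<and> v \<in> V) \<and>
     (\<forall>u v. E u v \<longrightarrow> E v u) \<and> (\<forall>u. \<not> E u u)"

definition locally_finite :: "'v set \<Rightarrow> ('v \<Rightarrow> 'v \<Rightarrow> bool) \<Rightarrow> bool" where
  "locally_finite V E \<longleftrightarrow> (\<forall>u\<in>V. finite {v. E u v})"

definition connected_graph :: "'v set \<Rightarrow> ('v \<Rightarrow> 'v \<Rightarrow> bool) \<Rightarrow> bool" where
  "connected_graph V E \<longleftrightarrow> V \<noteq> {} \<and> (\<forall>u\<in>V. \<forall>v\<in>V. E\<^sup>*\<^sup>* u v)"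

definition graph :: "'v set \<Rightarrow> ('v \<Rightarrow> 'v \<Rightarrow> bool) \<Rightarrow> bool" where
  "graph V E \<longleftrightarrow> simple_graph V E \<and> locally_finite V E \<and> connected_graph V E"

definition box_pow_V :: "'v set \<Rightarrow> nat \<Rightarrow> 'v list set" where
  "box_pow_V V n = {xs. length xs = n \<and> set xs \<subseteq> V}"

definition box_pow_E :: "('v \<Rightarrow> 'v \<Rightarrow> bool) \<Rightarrow> nat \<Rightarrow> 'v list \<Rightarrow> 'v list \<Rightarrow> bool" where
  "box_pow_E E n xs ys \<longleftrightarrow> length xs = n \<and> length ys = n \<and>
     (\<exists>i<n. E (xs ! i) (ys ! i) \<and> (\<forall>j<n. j \<noteq> i \<longrightarrow> xs ! j = ys ! j))"

text \<open>G^(n): vertices are degree-n monomials in vertices of G, i.e. multisets of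
  size n over V; adjacent iff one obtains one from the other by moving one token
  along one edge of G.\<close>

definition red_pow_V :: "'v set \<Rightarrow> nat \<Rightarrow> 'v multiset set" where
  "red_pow_V V n = {M. size M = n \<and> set_mset M \<subseteq> V}"

definition red_pow_E :: "('v \<Rightarrow> 'v \<Rightarrow> bool) \<Rightarrow> nat \<Rightarrow> 'v multiset \<Rightarrow> 'v multiset \<Rightarrow> bool" where
  "red_pow_E E n M N \<longleftrightarrow> size M = n \<and>
     (\<exists>u v. E u v \<and> u \<in># M \<and> N = M - {#u#} + {#v#})"

definition eta :: "'v list \<Rightarrow> 'v multiset" where
  "eta xs = mset xs"

definition strict_linear_on :: "'v set \<Rightarrow> ('v \<Rightarrow> 'v \<Rightarrow> bool) \<Rightarrow> bool" where
  "strict_linear_on V lt \<longleftrightarrow>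
     (\<forall>x\<in>V. \<not> lt x x) \<and>
     (\<forall>x\<in>V. \<forall>y\<in>V. \<forall>z\<in>V. lt x y \<longrightarrow> lt y z \<longrightarrow> lt x z) \<and>
     (\<forall>x\<in>V. \<forall>y\<in>V. x \<noteq> y \<longrightarrow> lt x y \<or> lt y x)"

text \<open>An element of the free abelian group C_1(K) on the edges w_i w_j (i<j) is
  represented by its (finitely supported) integer coefficient function on
  ordered pairs (w_i, w_j) with w_i < w_j adjacent.\<close>

definition C1 :: "('v \<Rightarrow> 'v \<Rightarrow> bool) \<Rightarrow> 'v set \<Rightarrow> ('v \<Rightarrow> 'v \<Rightarrow> bool) \<Rightarrow> ('v \<times> 'v \<Rightarrow> int) set" where
  "C1 lt V E = {c. finite {p. c p \<noteq> 0} \<and>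
     (\<forall>u v. c (u, v) \<noteq> 0 \<longrightarrow> u \<in> V \<and> v \<in> V \<and> E u v \<and> lt u v)}"

definition brk :: "('v \<Rightarrow> 'v \<Rightarrow> bool) \<Rightarrow> 'v \<Rightarrow> 'v \<Rightarrow> ('v \<times> 'v \<Rightarrow> int)" where
  "brk lt u v = (\<lambda>p. if u = v then 0
                    else if lt u v then (if p = (u, v) then 1 else 0)
                    else (if p = (v, u) then -1 else 0))"

definition is_path :: "'v set \<Rightarrow> ('v \<Rightarrow> 'v \<Rightarrow> bool) \<Rightarrow> 'v list \<Rightarrow> bool" where
  "is_path V E P \<longleftrightarrow> P \<noteq> [] \<and> set P \<subseteq> V \<and>
     (\<forall>i. Suc i < length P \<longrightarrow> E (P ! i) (P ! Suc i))"

definition path_chain :: "('v \<Rightarrow> 'v \<Rightarrow> bool) \<Rightarrow> 'v list \<Rightarrow> ('v \<times> 'v \<Rightarrow> int)" where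
  "path_chain lt P = (\<lambda>q. \<Sum>i<length P - 1. brk lt (P ! i) (P ! Suc i) q)"

definition is_cycle :: "'v set \<Rightarrow> ('v \<Rightarrow> 'v \<Rightarrow> bool) \<Rightarrow> 'v list \<Rightarrow> bool" where
  "is_cycle V E C \<longleftrightarrow> is_path V E C \<and> hd C = last C"

inductive_set H1 :: "('v \<Rightarrow> 'v \<Rightarrow> bool) \<Rightarrow> 'v set \<Rightarrow> ('v \<Rightarrow> 'v \<Rightarrow> bool) \<Rightarrow> ('v \<times> 'v \<Rightarrow> int) set"
  for lt V E where
  zero: "(\<lambda>q. 0) \<in> H1 lt V E"
| add: "c \<in> H1 lt V E \<Longrightarrow> is_cycle V E C \<Longrightarrow> (\<lambda>q. c q + path_chain lt C q) \<in> H1 lt V E"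
| diff: "c \<in> H1 lt V E \<Longrightarrow> is_cycle V E C \<Longrightarrow> (\<lambda>q. c q - path_chain lt C q) \<in> H1 lt V E"

definition chain_map :: "('w \<Rightarrow> 'w \<Rightarrow> bool) \<Rightarrow> ('v \<Rightarrow> 'w) \<Rightarrow> ('v \<times> 'v \<Rightarrow> int) \<Rightarrow> ('w \<times> 'w \<Rightarrow> int)" where
  "chain_map lt' f c = (\<lambda>q. \<Sum>p\<in>{p. c p \<noteq> 0}. c p * brk lt' (f (fst p)) (f (snd p)) q)"

end

theory Submission
  imports Defs
begin

fun pc :: "('v \<Rightarrow> 'v \<Rightarrow> bool) \<Rightarrow> 'v list \<Rightarrow> ('v \<times> 'v \<Rightarrow> int)" where
  "pc lt [] = (\<lambda>q. 0)"
| "pc lt [a] = (\<lambda>q. 0)"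
| "pc lt (a # b # P) = (\<lambda>q. brk lt a b q + pc lt (b # P) q)"

lemma path_chain_pc: "path_chain lt P = pc lt P"
proof (induction lt P rule: pc.induct)
  case (3 lt a b P)
  have "path_chain lt (a # b # P) q = brk lt a b q + path_chain lt (b # P) q" for q
    unfolding path_chain_def by (simp add: sum.lessThan_Suc_shift del: sum.lessThan_Suc)
  then show ?case using 3 by auto
qed (auto simp: path_chain_def)

lemma brk_nz: "brk lt u v p \<noteq> 0 \<Longrightarrow> p = (u,v) \<or> p = (v,u)"
  by (auto simp: brk_def split: if_splits)

lemma pc_nz: "pc lt P p \<noteq> 0 \<Longrightarrow> p \<in> set P \<times> set P"
proof (induction lt P rule: pc.induct)
  case (3 lt a b P)
  then have "brk lt a b p \<noteq> 0 \<or> pc lt (b # P) p \<noteq> 0" by auto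
  then show ?case
  proof
    assume "brk lt a b p \<noteq> 0" then show ?thesis by (auto dest: brk_nz)
  next
    assume "pc lt (b # P) p \<noteq> 0" then show ?thesis using 3 by auto
  qed
qed auto

lemma fin_pc: "finite {p. pc lt P p \<noteq> 0}"
  by (rule finite_subset[of _ "set P \<times> set P"]) (auto dest: pc_nz)

lemma brk_anti:
  assumes "strict_linear_on V lt" "u \<in> V" "v \<in> V"
  shows "brk lt u v q = - brk lt v u q"
proof -
  have "\<not> (lt u v \<and> lt v u)" using assms unfolding strict_linear_on_def by meson
  moreover have "u \<noteq> v \<Longrightarrow> lt u v \<or> lt v u" using assms unfolding strict_linear_on_def by meson
  ultimately show ?thesis
    by (cases "u = v"; cases "lt u v") (simp_all add: brk_def)
qed

lemma pc_app: "P \<noteq> [] \<Longrightarrow> Q \<noteq> [] \<Longrightarrow> last P = hd Q \<Longrightarrow> pc lt (P @ tl Q) q = pc lt P q + pc lt Q q"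
proof (induction P rule: induct_list012)
  case (2 x)
  then show ?case by (cases Q) auto
next
  case (3 x y zs)
  then show ?case by auto
qed auto

lemma pc_rev:
  assumes "strict_linear_on V lt"
  shows "set P \<subseteq> V \<Longrightarrow> pc lt (rev P) q = - pc lt P q"
proof (induction P rule: induct_list012)
  case (3 x y zs)
  have "rev (x # y # zs) = rev (y # zs) @ tl [y, x]" by simp
  then have "pc lt (rev (x # y # zs)) q = pc lt (rev (y # zs)) q + pc lt [y, x] q"
    using pc_app[of "rev (y # zs)" "[y,x]" lt q] by simp
  also have "\<dots> = - pc lt (y # zs) q + brk lt y x q" using 3 by simp
  also have "\<dots> = - pc lt (x # y # zs) q" using 3 brk_anti[OF assms, of y x q] by simp
  finally show ?case .
qed auto

lemma chain_map_eq:
  assumes "finite S" "{p. c p \<noteq> 0} \<subseteq> S"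
  shows "chain_map lt f c q = (\<Sum>p\<in>S. c p * brk lt (f (fst p)) (f (snd p)) q)"
  unfolding chain_map_def
  by (rule sum.mono_neutral_left) (use assms in auto)

lemma chain_map_add:
  assumes "finite {p. c p \<noteq> 0}" "finite {p. d p \<noteq> 0}"
  shows "chain_map lt f (\<lambda>q. c q + d q) q = chain_map lt f c q + chain_map lt f d q"
proof -
  let ?S = "{p. c p \<noteq> 0} \<union> {p. d p \<noteq> 0}"
  have "chain_map lt f (\<lambda>q. c q + d q) q = (\<Sum>p\<in>?S. (c p + d p) * brk lt (f (fst p)) (f (snd p)) q)"
    by (rule chain_map_eq) (use assms in auto)
  also have "\<dots> = (\<Sum>p\<in>?S. c p * brk lt (f (fst p)) (f (snd p)) q) + (\<Sum>p\<in>?S. d p * brk lt (f (fst p)) (f (snd p)) q)"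
    by (simp add: sum.distrib ring_distribs)
  also have "\<dots> = chain_map lt f c q + chain_map lt f d q"
    using chain_map_eq[of ?S c lt f q] chain_map_eq[of ?S d lt f q] assms by auto
  finally show ?thesis .
qed

lemma chain_map_diff:
  assumes "finite {p. c p \<noteq> 0}" "finite {p. d p \<noteq> 0}"
  shows "chain_map lt f (\<lambda>q. c q - d q) q = chain_map lt f c q - chain_map lt f d q"
proof -
  let ?S = "{p. c p \<noteq> 0} \<union> {p. d p \<noteq> 0}"
  have "chain_map lt f (\<lambda>q. c q - d q) q = (\<Sum>p\<in>?S. (c p - d p) * brk lt (f (fst p)) (f (snd p)) q)"
    by (rule chain_map_eq) (use assms in auto)
  also have "\<dots> = (\<Sum>p\<in>?S. c p * brk lt (f (fst p)) (f (snd p)) q) - (\<Sum>p\<in>?S. d p * brk lt (f (fst p)) (f (snd p)) q)"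
    by (simp add: sum_subtractf left_diff_distrib)
  also have "\<dots> = chain_map lt f c q - chain_map lt f d q"
    using chain_map_eq[of ?S c lt f q] chain_map_eq[of ?S d lt f q] assms by auto
  finally show ?thesis .
qed

lemma chain_map_zero: "chain_map lt f (\<lambda>q. 0) = (\<lambda>q. 0)"
  unfolding chain_map_def by simp

lemma chain_map_brk:
  assumes "strict_linear_on V1 lt1" "strict_linear_on V2 lt2" "u \<in> V1" "v \<in> V1" "f u \<in> V2" "f v \<in> V2"
  shows "chain_map lt2 f (brk lt1 u v) q = brk lt2 (f u) (f v) q"
proof (cases "u = v")
  case True
  then show ?thesis unfolding chain_map_def by (simp add: brk_def)
next
  case False
  have as: "\<not> (lt1 u v \<and> lt1 v u)" using assms unfolding strict_linear_on_def by meson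
  have li: "lt1 u v \<or> lt1 v u" using assms False unfolding strict_linear_on_def by meson
  have "chain_map lt2 f (brk lt1 u v) q = (\<Sum>p\<in>{(u,v),(v,u)}. brk lt1 u v p * brk lt2 (f (fst p)) (f (snd p)) q)"
    by (rule chain_map_eq) (auto dest: brk_nz)
  also have "\<dots> = brk lt1 u v (u,v) * brk lt2 (f u) (f v) q + brk lt1 u v (v,u) * brk lt2 (f v) (f u) q"
    using False by simp
  also have "\<dots> = brk lt2 (f u) (f v) q"
  proof (cases "lt1 u v")
    case True
    then show ?thesis using False by (simp add: brk_def)
  next
    case F2: False
    then have "lt1 v u" using li by simp
    then show ?thesis using False F2 brk_anti[OF assms(2) assms(5,6), of q] by (simp add: brk_def)
  qed
  finally show ?thesis .
qed

lemma chain_map_pc: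
  assumes "strict_linear_on V1 lt1" "strict_linear_on V2 lt2" "f ` V1 \<subseteq> V2"
  shows "set P \<subseteq> V1 \<Longrightarrow> chain_map lt2 f (pc lt1 P) q = pc lt2 (map f P) q"
proof (induction P arbitrary: q rule: induct_list012)
  case (3 a b P)
  have fb: "finite {p. brk lt1 a b p \<noteq> 0}"
    by (rule finite_subset[of _ "{(a,b),(b,a)}"]) (auto dest: brk_nz)
  have "chain_map lt2 f (pc lt1 (a # b # P)) q = chain_map lt2 f (brk lt1 a b) q + chain_map lt2 f (pc lt1 (b # P)) q"
    using chain_map_add[of "brk lt1 a b" "pc lt1 (b # P)" lt2 f q, OF fb fin_pc] by simp
  also have "\<dots> = brk lt2 (f a) (f b) q + pc lt2 (map f (b # P)) q"
  proof -
    have v: "a \<in> V1" "b \<in> V1" "f a \<in> V2" "f b \<in> V2" using 3(3) assms(3) by auto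
    show ?thesis using 3 chain_map_brk[OF assms(1,2) v] by auto
  qed
  finally show ?case by simp
qed (auto simp: chain_map_zero)


lemma is_path_single[simp]: "is_path V E [a] \<longleftrightarrow> a \<in> V"
  by (simp add: is_path_def)

lemma is_path_Cons2: "is_path V E (a # b # P) \<longleftrightarrow> a \<in> V \<and> E a b \<and> is_path V E (b # P)"
proof
  assume h: "is_path V E (a # b # P)"
  then have h2: "\<And>i. Suc i < length (a # b # P) \<Longrightarrow> E ((a # b # P) ! i) ((a # b # P) ! Suc i)"
    and s: "set (a # b # P) \<subseteq> V" unfolding is_path_def by blast+
  have "E a b" using h2[of 0] by simp
  moreover have "E ((b # P) ! i) ((b # P) ! Suc i)" if "Suc i < length (b # P)" for i
    using h2[of "Suc i"] that by simp
  ultimately show "a \<in> V \<and> E a b \<and> is_path V E (b # P)" using s unfolding is_path_def by auto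
next
  assume h: "a \<in> V \<and> E a b \<and> is_path V E (b # P)"
  have "E ((a # b # P) ! i) ((a # b # P) ! Suc i)" if "Suc i < length (a # b # P)" for i
  proof (cases i)
    case 0 then show ?thesis using h by simp
  next
    case (Suc k) then show ?thesis using h that unfolding is_path_def by auto
  qed
  then show "is_path V E (a # b # P)" using h unfolding is_path_def by auto
qed

lemma is_path_set: "is_path V E P \<Longrightarrow> set P \<subseteq> V"
  by (simp add: is_path_def)

lemma is_path_ne: "is_path V E P \<Longrightarrow> P \<noteq> []"
  by (simp add: is_path_def)

lemma is_path_app:
  "is_path V E P \<Longrightarrow> is_path V E Q \<Longrightarrow> last P = hd Q \<Longrightarrow> is_path V E (P @ tl Q)"
proof (induction P rule: induct_list012)
  case (2 x)
  then show ?case by (cases Q) auto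
next
  case (3 x y zs)
  then show ?case by (simp add: is_path_Cons2)
qed (simp add: is_path_def)

lemma last_app_tl: "Q \<noteq> [] \<Longrightarrow> P \<noteq> [] \<Longrightarrow> last P = hd Q \<Longrightarrow> last (P @ tl Q) = last Q"
  by (cases Q) auto

lemma hd_app_tl: "P \<noteq> [] \<Longrightarrow> hd (P @ tl Q) = hd P"
  by (cases P) auto

lemma is_path_rev:
  assumes sym: "\<forall>u v. E u v \<longrightarrow> E v u" and p: "is_path V E P"
  shows "is_path V E (rev P)"
proof -
  have "E (rev P ! i) (rev P ! Suc i)" if "Suc i < length P" for i
  proof -
    define j where "j = length P - Suc (Suc i)"
    have 1: "Suc j < length P" using that j_def by auto
    have 2: "rev P ! i = P ! Suc j" using that j_def by (simp add: rev_nth Suc_diff_Suc)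
    have 3: "rev P ! Suc i = P ! j" using that j_def by (simp add: rev_nth)
    have "E (P ! j) (P ! Suc j)" using p 1 unfolding is_path_def by blast
    then show ?thesis using 2 3 sym by auto
  qed
  then show ?thesis using p unfolding is_path_def by auto
qed

lemma rtranclp_path:
  assumes "simple_graph V E"
  shows "E\<^sup>*\<^sup>* a b \<Longrightarrow> b \<in> V \<Longrightarrow> \<exists>p. is_path V E p \<and> hd p = a \<and> last p = b"
proof (induction rule: converse_rtranclp_induct)
  case base
  then show ?case by (intro exI[of _ "[b]"]) simp
next
  case (step y z)
  then obtain p where p: "is_path V E p" "hd p = z" "last p = b" by auto
  have "y \<in> V" using step(1) assms unfolding simple_graph_def by blast
  moreover have "p \<noteq> []" using p by (simp add: is_path_def)
  ultimately show ?case using p step(1)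
    by (intro exI[of _ "y # p"]) (cases p, auto simp: is_path_Cons2)
qed

lemma box_upd_V: "x \<in> box_pow_V V n \<Longrightarrow> t \<in> V \<Longrightarrow> x[k:=t] \<in> box_pow_V V n"
  unfolding box_pow_V_def using set_update_subset_insert[of x k t] by auto

lemma box_upd_E: "x \<in> box_pow_V V n \<Longrightarrow> k < n \<Longrightarrow> E s t \<Longrightarrow> box_pow_E E n (x[k:=s]) (x[k:=t])"
  unfolding box_pow_V_def box_pow_E_def by (intro conjI exI[of _ k]) auto

lemma path_upd:
  assumes "x \<in> box_pow_V V n" "k < n"
  shows "is_path V E p \<Longrightarrow> is_path (box_pow_V V n) (box_pow_E E n) (map (\<lambda>t. x[k:=t]) p)"
proof (induction p rule: induct_list012)
  case (2 a)
  then show ?case using assms box_upd_V by simp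
next
  case (3 a b zs)
  then show ?case using box_upd_V[OF assms(1)] box_upd_E[OF assms] by (simp add: is_path_Cons2)
qed (simp add: is_path_def)

lemma eta_V: "x \<in> box_pow_V V n \<Longrightarrow> eta x \<in> red_pow_V V n"
  unfolding box_pow_V_def red_pow_V_def eta_def by auto

lemma eta_E: "box_pow_E E n x y \<Longrightarrow> red_pow_E E n (eta x) (eta y)"
proof -
  assume h: "box_pow_E E n x y"
  then obtain i where i: "i < n" "E (x ! i) (y ! i)" "\<forall>j<n. j \<noteq> i \<longrightarrow> x ! j = y ! j"
    and l: "length x = n" "length y = n" unfolding box_pow_E_def by blast
  have "y = x[i := y ! i]" using i l by (intro nth_equalityI) (auto simp: nth_list_update)
  then have "mset y = add_mset (y ! i) (mset x - {#x ! i#})" using mset_update[of i x "y ! i"] i l by simp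
  moreover have "x ! i \<in># mset x" using i l by simp
  ultimately show ?thesis unfolding red_pow_E_def eta_def using i l
    by (intro conjI exI[of _ "x ! i"] exI[of _ "y ! i"]) auto
qed

lemma eta_path:
  "is_path (box_pow_V V n) (box_pow_E E n) P \<Longrightarrow> is_path (red_pow_V V n) (red_pow_E E n) (map eta P)"
proof (induction P rule: induct_list012)
  case (2 a)
  then show ?case using eta_V by simp
next
  case (3 a b zs)
  then show ?case by (simp add: is_path_Cons2 eta_V eta_E)
qed (simp add: is_path_def)


lemma lift_path:
  assumes sg: "simple_graph V E"
  shows "is_path (red_pow_V V n) (red_pow_E E n) D \<Longrightarrow> x \<in> box_pow_V V n \<Longrightarrow> eta x = hd D \<Longrightarrow>
    \<exists>P. is_path (box_pow_V V n) (box_pow_E E n) P \<and> hd P = x \<and> map eta P = D"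
proof (induction D arbitrary: x rule: induct_list012)
  case 1
  then show ?case by (simp add: is_path_def)
next
  case (2 M)
  then show ?case by (intro exI[of _ "[x]"]) simp
next
  case (3 M N D)
  have MN: "red_pow_E E n M N" and pN: "is_path (red_pow_V V n) (red_pow_E E n) (N # D)"
    using 3(3) by (auto simp: is_path_Cons2)
  then obtain u v where uv: "E u v" "u \<in># M" "N = M - {#u#} + {#v#}" unfolding red_pow_E_def by blast
  have Mx: "M = mset x" using 3(5) by (simp add: eta_def)
  have lx: "length x = n" using 3(4) by (simp add: box_pow_V_def)
  obtain i where i: "i < length x" "x ! i = u" using uv(2) Mx by (metis in_set_conv_nth set_mset_mset)
  have vV: "v \<in> V" using sg uv(1) unfolding simple_graph_def by blast
  define y where "y = x[i := v]"
  have yV: "y \<in> box_pow_V V n" using box_upd_V[OF 3(4) vV] y_def by simp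
  have "box_pow_E E n (x[i := x ! i]) (x[i := v])" using box_upd_E[OF 3(4), of i E "x ! i" v] i lx uv by simp
  then have xy: "box_pow_E E n x y" using y_def by simp
  have "eta y = add_mset v (mset x - {#x ! i#})" unfolding eta_def y_def using i(1) by (rule mset_update)
  also have "\<dots> = N" using uv(3) Mx i(2) by simp
  finally have eyN: "eta y = N" .
  have "\<exists>P. is_path (box_pow_V V n) (box_pow_E E n) P \<and> hd P = y \<and> map eta P = N # D"
    by (rule 3(2)[OF pN yV]) (simp only: eyN list.sel(1))
  then obtain P where P: "is_path (box_pow_V V n) (box_pow_E E n) P" "hd P = y" "map eta P = N # D"
    by (elim exE conjE)
  obtain P' where P': "P = y # P'" using P(2,3) by (cases P) auto
  have "is_path (box_pow_V V n) (box_pow_E E n) (x # y # P')"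
    unfolding is_path_Cons2 using P(1) P' xy 3(4) by simp
  moreover have "map eta (x # y # P') = M # N # D" using P(3) P' Mx by (simp add: eta_def)
  ultimately show ?case by (intro exI[of _ "x # y # P'"]) simp
qed

lemma swap_path:
  assumes g: "graph V E" and sl: "strict_linear_on (red_pow_V V n) lt2" and x: "x \<in> box_pow_V V n"
    and ij: "i < n" "j < n" "i \<noteq> j" "x ! i \<noteq> x ! j"
  shows "\<exists>Q. is_path (box_pow_V V n) (box_pow_E E n) Q \<and> hd Q = x \<and> last Q = x[i := x ! j, j := x ! i]
     \<and> (\<forall>q. pc lt2 (map eta Q) q = 0)"
proof -
  define a where "a = x ! i"
  define b where "b = x ! j"
  have lx: "length x = n" using x by (simp add: box_pow_V_def)
  have aV: "a \<in> V" and bV: "b \<in> V" using x ij lx unfolding a_def b_def box_pow_V_def by auto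
  have sg: "simple_graph V E" and cg: "connected_graph V E" using g unfolding graph_def by auto
  have sym: "\<forall>u v. E u v \<longrightarrow> E v u" using sg unfolding simple_graph_def by blast
  obtain p where p: "is_path V E p" "hd p = a" "last p = b"
    using rtranclp_path[OF sg, of a b] cg aV bV unfolding connected_graph_def by blast
  have pne: "p \<noteq> []" using p by (simp add: is_path_def)
  define x' where "x' = x[i := b]"
  have x'V: "x' \<in> box_pow_V V n" using box_upd_V[OF x bV] x'_def by simp
  define Q1 where "Q1 = map (\<lambda>t. x[i:=t]) p"
  define Q2 where "Q2 = map (\<lambda>t. x'[j:=t]) (rev p)"
  have pQ1: "is_path (box_pow_V V n) (box_pow_E E n) Q1" using path_upd[OF x ij(1) p(1)] Q1_def by simp
  have pQ2: "is_path (box_pow_V V n) (box_pow_E E n) Q2"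
    using path_upd[OF x'V ij(2) is_path_rev[OF sym p(1)]] Q2_def by simp
  have x'j: "x' ! j = b" using ij lx unfolding x'_def b_def by simp
  have lQ1: "last Q1 = x'" using pne p unfolding Q1_def x'_def by (simp add: last_map)
  have hQ2: "hd Q2 = x'" using pne p x'j unfolding Q2_def by (simp add: hd_map hd_rev) (metis list_update_id)
  have ne1: "Q1 \<noteq> []" and ne2: "Q2 \<noteq> []" using pne unfolding Q1_def Q2_def by auto
  define Q where "Q = Q1 @ tl Q2"
  have pQ: "is_path (box_pow_V V n) (box_pow_E E n) Q" unfolding Q_def
    using is_path_app[OF pQ1 pQ2] lQ1 hQ2 by simp
  have hQ: "hd Q = x" unfolding Q_def using hd_app_tl[OF ne1] pne p unfolding Q1_def a_def
    by (simp add: hd_map)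
  have lQ: "last Q = x[i := x ! j, j := x ! i]" unfolding Q_def
    using last_app_tl[OF ne2 ne1] lQ1 hQ2 pne p unfolding Q2_def x'_def a_def b_def
    by (simp add: last_map last_rev)
  define G where "G = (\<lambda>t. add_mset t (mset x - {#a#}))"
  have e1: "map eta Q1 = map G p" unfolding Q1_def G_def
    using mset_update[of i x] ij lx by (simp add: eta_def a_def)
  have "mset x' = add_mset b (mset x - {#a#})" unfolding x'_def using mset_update[of i x b] ij lx
    by (simp add: a_def)
  then have "eta (x'[j := t]) = G t" for t
    using mset_update[of j x' t] ij lx x'j unfolding G_def eta_def x'_def by simp
  then have e2: "map eta Q2 = rev (map G p)" unfolding Q2_def by (simp add: rev_map)
  have setL: "set (map G p) \<subseteq> red_pow_V V n"
    using is_path_set[OF pQ1] eta_V e1 by (metis image_subsetI list.set_map subsetD)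
  have "pc lt2 (map eta Q) q = 0" for q
  proof -
    have "map eta Q = map G p @ tl (rev (map G p))" unfolding Q_def using e1 e2 by (simp add: map_tl)
    then have "pc lt2 (map eta Q) q = pc lt2 (map G p) q + pc lt2 (rev (map G p)) q"
      using pc_app[of "map G p" "rev (map G p)" lt2 q] pne by (simp add: hd_rev)
    also have "\<dots> = 0" using pc_rev[OF sl setL] by simp
    finally show ?thesis .
  qed
  then show ?thesis using pQ hQ lQ by blast
qed


lemma count_card: "count (mset xs) c = card {k. k < length xs \<and> xs ! k = c}"
  by (simp add: count_mset count_list_eq_length_filter length_filter_conv_card eq_commute)

lemma perm_path:
  assumes g: "graph V E" and sl: "strict_linear_on (red_pow_V V n) lt2" and x: "x \<in> box_pow_V V n"
  shows "y \<in> box_pow_V V n \<Longrightarrow> mset y = mset x \<Longrightarrow>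
    \<exists>Q. is_path (box_pow_V V n) (box_pow_E E n) Q \<and> hd Q = y \<and> last Q = x \<and> (\<forall>q. pc lt2 (map eta Q) q = 0)"
proof (induction "card {k. k < n \<and> y ! k \<noteq> x ! k}" arbitrary: y rule: less_induct)
  case less
  have lx: "length x = n" using x by (simp add: box_pow_V_def)
  have ly: "length y = n" using less(2) by (simp add: box_pow_V_def)
  show ?case
  proof (cases "y = x")
    case True
    then show ?thesis using x by (intro exI[of _ "[x]"]) simp
  next
    case False
    then obtain i where i: "i < n" "y ! i \<noteq> x ! i" using lx ly nth_equalityI by metis
    define c where "c = x ! i"
    have "\<exists>j<n. y ! j = c \<and> x ! j \<noteq> c"
    proof (rule ccontr)
      assume "\<not> ?thesis"
      then have sub: "{k. k < n \<and> y ! k = c} \<subseteq> {k. k < n \<and> x ! k = c} - {i}"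
        using i c_def by auto
      have "card {k. k < n \<and> y ! k = c} \<le> card ({k. k < n \<and> x ! k = c} - {i})"
        by (rule card_mono[OF _ sub]) simp
      also have "\<dots> < card {k. k < n \<and> x ! k = c}"
        by (rule card_Diff1_less) (use i c_def in auto)
      finally have "count (mset y) c < count (mset x) c" using lx ly by (simp add: count_card)
      then show False using less(3) by simp
    qed
    then obtain j where j: "j < n" "y ! j = c" "x ! j \<noteq> c" by blast
    have ji: "j \<noteq> i" using j i c_def by auto
    have yij: "y ! i \<noteq> y ! j" using i j c_def by auto
    obtain Q1 where Q1: "is_path (box_pow_V V n) (box_pow_E E n) Q1" "hd Q1 = y"
      "last Q1 = y[i := y ! j, j := y ! i]" "\<forall>q. pc lt2 (map eta Q1) q = 0"
      using swap_path[OF g sl less(2) i(1) j(1) ji[symmetric] yij] by blast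
    define y' where "y' = y[i := y ! j, j := y ! i]"
    have my': "mset y' = mset y" unfolding y'_def using mset_swap[of j y i] i j ly ji
      by (simp add: list_update_swap)
    have y'V: "y' \<in> box_pow_V V n" using less(2) my' ly
      unfolding box_pow_V_def by (metis (no_types, lifting) mem_Collect_eq set_mset_mset size_mset)
    have sub: "{k. k < n \<and> y' ! k \<noteq> x ! k} \<subseteq> {k. k < n \<and> y ! k \<noteq> x ! k} - {i}"
      using i j ji ly c_def unfolding y'_def by (auto simp: nth_list_update)
    have "card {k. k < n \<and> y' ! k \<noteq> x ! k} < card {k. k < n \<and> y ! k \<noteq> x ! k}"
    proof -
      have "card {k. k < n \<and> y' ! k \<noteq> x ! k} \<le> card ({k. k < n \<and> y ! k \<noteq> x ! k} - {i})"
        by (rule card_mono[OF _ sub]) simp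
      also have "\<dots> < card {k. k < n \<and> y ! k \<noteq> x ! k}"
        by (rule card_Diff1_less) (use i in auto)
      finally show ?thesis .
    qed
    moreover have "mset y' = mset x" using my' less(3) by simp
    ultimately have "\<exists>Q. is_path (box_pow_V V n) (box_pow_E E n) Q \<and> hd Q = y' \<and> last Q = x \<and> (\<forall>q. pc lt2 (map eta Q) q = 0)"
      by (rule less(1)[OF _ y'V])
    then obtain Q2 where Q2: "is_path (box_pow_V V n) (box_pow_E E n) Q2" "hd Q2 = y'"
      "last Q2 = x" "\<forall>q. pc lt2 (map eta Q2) q = 0"
      by (elim exE conjE)
    have ne1: "Q1 \<noteq> []" and ne2: "Q2 \<noteq> []" using Q1 Q2 by (auto simp: is_path_def)
    have l12: "last Q1 = hd Q2" using Q1 Q2 y'_def by simp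
    define Q where "Q = Q1 @ tl Q2"
    have "is_path (box_pow_V V n) (box_pow_E E n) Q" using is_path_app[OF Q1(1) Q2(1) l12] Q_def by simp
    moreover have "hd Q = y" using hd_app_tl[OF ne1] Q1 Q_def by simp
    moreover have "last Q = x" using last_app_tl[OF ne2 ne1 l12] Q2 Q_def by simp
    moreover have "pc lt2 (map eta Q) q = 0" for q
    proof -
      have "map eta Q = map eta Q1 @ tl (map eta Q2)" unfolding Q_def by (simp add: map_tl)
      moreover have "last (map eta Q1) = hd (map eta Q2)" using l12 ne1 ne2 by (simp add: last_map hd_map)
      ultimately show ?thesis using pc_app[of "map eta Q1" "map eta Q2" lt2 q] ne1 ne2 Q1(4) Q2(4) by simp
    qed
    ultimately show ?thesis by blast
  qed
qed


lemma H1_fin: "c \<in> H1 lt V E \<Longrightarrow> finite {p. c p \<noteq> 0}"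
proof (induction rule: H1.induct)
  case zero
  then show ?case by simp
next
  case (add c C)
  have "{p. c p + path_chain lt C p \<noteq> 0} \<subseteq> {p. c p \<noteq> 0} \<union> {p. pc lt C p \<noteq> 0}"
    by (auto simp: path_chain_pc)
  then show ?case using add fin_pc finite_subset by fastforce
next
  case (diff c C)
  have "{p. c p - path_chain lt C p \<noteq> 0} \<subseteq> {p. c p \<noteq> 0} \<union> {p. pc lt C p \<noteq> 0}"
    by (auto simp: path_chain_pc)
  then show ?case using diff fin_pc finite_subset by fastforce
qed

lemma eta_img: "eta ` box_pow_V V n \<subseteq> red_pow_V V n"
  using eta_V by blast

lemma chain_map_path_chain:
  assumes sl1: "strict_linear_on (box_pow_V V n) lt1" and sl2: "strict_linear_on (red_pow_V V n) lt2"
    and C: "is_path (box_pow_V V n) (box_pow_E E n) C"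
  shows "chain_map lt2 eta (path_chain lt1 C) q = path_chain lt2 (map eta C) q"
  using chain_map_pc[OF sl1 sl2 eta_img is_path_set[OF C]] by (simp add: path_chain_pc)

lemma cycle_lift:
  assumes g: "graph V E" and sl1: "strict_linear_on (box_pow_V V n) lt1"
    and sl2: "strict_linear_on (red_pow_V V n) lt2"
    and D: "is_cycle (red_pow_V V n) (red_pow_E E n) D"
  shows "\<exists>C. is_cycle (box_pow_V V n) (box_pow_E E n) C \<and>
     (\<forall>q. chain_map lt2 eta (path_chain lt1 C) q = path_chain lt2 D q)"
proof -
  have sg: "simple_graph V E" using g by (simp add: graph_def)
  have pD: "is_path (red_pow_V V n) (red_pow_E E n) D" and hl: "hd D = last D"
    using D by (auto simp: is_cycle_def)
  have Dne: "D \<noteq> []" using pD by (simp add: is_path_def)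
  have "hd D \<in> red_pow_V V n" using is_path_set[OF pD] Dne by auto
  obtain x where mx: "mset x = hd D" using ex_mset by blast
  have xV: "x \<in> box_pow_V V n" using \<open>hd D \<in> red_pow_V V n\<close> mx
    unfolding red_pow_V_def box_pow_V_def by (metis mem_Collect_eq set_mset_mset size_mset)
  obtain P where P: "is_path (box_pow_V V n) (box_pow_E E n) P" "hd P = x" "map eta P = D"
    using lift_path[OF sg pD xV] mx by (auto simp: eta_def)
  have Pne: "P \<noteq> []" using P by (simp add: is_path_def)
  have lPV: "last P \<in> box_pow_V V n" using is_path_set[OF P(1)] Pne by auto
  have elP: "eta (last P) = last D" using P(3) Pne by (auto simp: last_map)
  have "mset (last P) = mset x" using elP hl mx by (simp add: eta_def)
  then have "\<exists>Q. is_path (box_pow_V V n) (box_pow_E E n) Q \<and> hd Q = last P \<and> last Q = x \<and> (\<forall>q. pc lt2 (map eta Q) q = 0)"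
    by (rule perm_path[OF g sl2 xV lPV])
  then obtain Q where Q: "is_path (box_pow_V V n) (box_pow_E E n) Q" "hd Q = last P" "last Q = x"
     "\<forall>q. pc lt2 (map eta Q) q = 0" by (elim exE conjE)
  have Qne: "Q \<noteq> []" using Q by (simp add: is_path_def)
  define C where "C = P @ tl Q"
  have pC: "is_path (box_pow_V V n) (box_pow_E E n) C" using is_path_app[OF P(1) Q(1)] Q(2) C_def by simp
  have "hd C = x" using hd_app_tl[OF Pne] P C_def by simp
  moreover have "last C = x" using last_app_tl[OF Qne Pne] Q C_def by simp
  ultimately have cC: "is_cycle (box_pow_V V n) (box_pow_E E n) C" using pC by (simp add: is_cycle_def)
  have "chain_map lt2 eta (path_chain lt1 C) q = path_chain lt2 D q" for q
  proof -
    have "chain_map lt2 eta (path_chain lt1 C) q = pc lt2 (map eta C) q"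
      using chain_map_path_chain[OF sl1 sl2 pC] by (simp add: path_chain_pc)
    also have "map eta C = D @ tl (map eta Q)" unfolding C_def using P(3) by (simp add: map_tl)
    also have "pc lt2 (D @ tl (map eta Q)) q = pc lt2 D q + pc lt2 (map eta Q) q"
      using pc_app[of D "map eta Q" lt2 q] Dne Qne Q(2) elP by (simp add: hd_map)
    also have "\<dots> = path_chain lt2 D q" using spec[OF Q(4), of q] by (simp add: path_chain_pc)
    finally show ?thesis .
  qed
  then show ?thesis using cC by blast
qed

theorem lemma4p3:
  fixes V :: "'a set" and E :: "'a \<Rightarrow> 'a \<Rightarrow> bool" and n :: nat
    and lt1 :: "'a list \<Rightarrow> 'a list \<Rightarrow> bool"
    and lt2 :: "'a multiset \<Rightarrow> 'a multiset \<Rightarrow> bool"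
  assumes "graph V E" and "n \<ge> 1"
    and "strict_linear_on (box_pow_V V n) lt1"
    and "strict_linear_on (red_pow_V V n) lt2"
  shows "chain_map lt2 eta ` H1 lt1 (box_pow_V V n) (box_pow_E E n)
           = H1 lt2 (red_pow_V V n) (red_pow_E E n)"
proof
  show "chain_map lt2 eta ` H1 lt1 (box_pow_V V n) (box_pow_E E n) \<subseteq> H1 lt2 (red_pow_V V n) (red_pow_E E n)"
  proof
    fix d assume "d \<in> chain_map lt2 eta ` H1 lt1 (box_pow_V V n) (box_pow_E E n)"
    then obtain c where c: "c \<in> H1 lt1 (box_pow_V V n) (box_pow_E E n)" "d = chain_map lt2 eta c" by blast
    have "chain_map lt2 eta c \<in> H1 lt2 (red_pow_V V n) (red_pow_E E n)" using c(1)
    proof (induction rule: H1.induct)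
      case zero
      then show ?case by (simp add: chain_map_zero H1.zero)
    next
      case (add c C)
      have pC: "is_path (box_pow_V V n) (box_pow_E E n) C" using add(2) by (simp add: is_cycle_def)
      have cyc: "is_cycle (red_pow_V V n) (red_pow_E E n) (map eta C)"
        using eta_path[OF pC] add(2) pC by (auto simp: is_cycle_def hd_map last_map is_path_def)
      have "chain_map lt2 eta (\<lambda>q. c q + path_chain lt1 C q) = (\<lambda>q. chain_map lt2 eta c q + path_chain lt2 (map eta C) q)"
      proof
        fix q
        show "chain_map lt2 eta (\<lambda>q. c q + path_chain lt1 C q) q = chain_map lt2 eta c q + path_chain lt2 (map eta C) q"
          using chain_map_add[of c "path_chain lt1 C" lt2 eta q, OF H1_fin[OF add(1)]]
            chain_map_path_chain[OF assms(3,4) pC, of q] fin_pc[of lt1 C]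
          by (simp add: path_chain_pc)
      qed
      then show ?case using H1.add[OF add(3) cyc] by simp
    next
      case (diff c C)
      have pC: "is_path (box_pow_V V n) (box_pow_E E n) C" using diff(2) by (simp add: is_cycle_def)
      have cyc: "is_cycle (red_pow_V V n) (red_pow_E E n) (map eta C)"
        using eta_path[OF pC] diff(2) pC by (auto simp: is_cycle_def hd_map last_map is_path_def)
      have "chain_map lt2 eta (\<lambda>q. c q - path_chain lt1 C q) = (\<lambda>q. chain_map lt2 eta c q - path_chain lt2 (map eta C) q)"
      proof
        fix q
        show "chain_map lt2 eta (\<lambda>q. c q - path_chain lt1 C q) q = chain_map lt2 eta c q - path_chain lt2 (map eta C) q"
          using chain_map_diff[of c "path_chain lt1 C" lt2 eta q, OF H1_fin[OF diff(1)]]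
            chain_map_path_chain[OF assms(3,4) pC, of q] fin_pc[of lt1 C]
          by (simp add: path_chain_pc)
      qed
      then show ?case using H1.diff[OF diff(3) cyc] by simp
    qed
    then show "d \<in> H1 lt2 (red_pow_V V n) (red_pow_E E n)" using c(2) by simp
  qed
next
  show "H1 lt2 (red_pow_V V n) (red_pow_E E n) \<subseteq> chain_map lt2 eta ` H1 lt1 (box_pow_V V n) (box_pow_E E n)"
  proof
    fix d assume "d \<in> H1 lt2 (red_pow_V V n) (red_pow_E E n)"
    then show "d \<in> chain_map lt2 eta ` H1 lt1 (box_pow_V V n) (box_pow_E E n)"
    proof (induction rule: H1.induct)
      case zero
      have "(\<lambda>q. 0) = chain_map lt2 eta (\<lambda>q. 0)" by (simp add: chain_map_zero)
      then show ?case using H1.zero by blast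
    next
      case (add c D)
      obtain c' where c': "c' \<in> H1 lt1 (box_pow_V V n) (box_pow_E E n)" "c = chain_map lt2 eta c'"
        using add(3) by blast
      obtain C where C: "is_cycle (box_pow_V V n) (box_pow_E E n) C"
        "\<forall>q. chain_map lt2 eta (path_chain lt1 C) q = path_chain lt2 D q"
        using cycle_lift[OF assms(1,3,4) add(2)] by blast
      have eq: "chain_map lt2 eta (\<lambda>q. c' q + path_chain lt1 C q) = (\<lambda>q. c q + path_chain lt2 D q)"
      proof
        fix q
        show "chain_map lt2 eta (\<lambda>q. c' q + path_chain lt1 C q) q = c q + path_chain lt2 D q"
          using chain_map_add[of c' "path_chain lt1 C" lt2 eta q, OF H1_fin[OF c'(1)]]
            spec[OF C(2), of q] c'(2) fin_pc[of lt1 C] by (simp add: path_chain_pc)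
      qed
      moreover have mem: "(\<lambda>q. c' q + path_chain lt1 C q) \<in> H1 lt1 (box_pow_V V n) (box_pow_E E n)"
        using H1.add[OF c'(1) C(1)] .
      show ?case by (rule image_eqI[where f="chain_map lt2 eta", OF eq[symmetric] mem])
    next
      case (diff c D)
      obtain c' where c': "c' \<in> H1 lt1 (box_pow_V V n) (box_pow_E E n)" "c = chain_map lt2 eta c'"
        using diff(3) by blast
      obtain C where C: "is_cycle (box_pow_V V n) (box_pow_E E n) C"
        "\<forall>q. chain_map lt2 eta (path_chain lt1 C) q = path_chain lt2 D q"
        using cycle_lift[OF assms(1,3,4) diff(2)] by blast
      have eq: "chain_map lt2 eta (\<lambda>q. c' q - path_chain lt1 C q) = (\<lambda>q. c q - path_chain lt2 D q)"
      proof
        fix q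
        show "chain_map lt2 eta (\<lambda>q. c' q - path_chain lt1 C q) q = c q - path_chain lt2 D q"
          using chain_map_diff[of c' "path_chain lt1 C" lt2 eta q, OF H1_fin[OF c'(1)]]
            spec[OF C(2), of q] c'(2) fin_pc[of lt1 C] by (simp add: path_chain_pc)
      qed
      moreover have mem: "(\<lambda>q. c' q - path_chain lt1 C q) \<in> H1 lt1 (box_pow_V V n) (box_pow_E E n)"
        using H1.diff[OF c'(1) C(1)] .
      show ?case by (rule image_eqI[where f="chain_map lt2 eta", OF eq[symmetric] mem])
    qed
  qed
qed

end
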